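(* Let $L$ be a finite monolithic primitive group whose socle $N$ is non-abelian, let $k'$ be a positive integer, and let $L_{k'}$ be the crown-based power of $L$ of size $k'$, whose socle is $N^{k'}$. If $H'$ is a core-free subgroup of $L_{k'}$ with $H'\le N^{k'}$, then $|N^{k'}:H'|\ge 5^{k'}$.
   Context: All groups are finite. A group $L$ is primitive if it has a maximal subgroup with trivial core; it is monolithic primitive if moreover it has a unique minimal normal subgroup, its socle $N=\mathrm{soc}(L)$. For a positive integer $k$, the crown-based power of $L$ of size $k$ is $L_k:=\{(l_1,\ldots,l_k)\in L^k\mid l_1\equiv\cdots\equiv l_k \pmod N\}=N^k\,\mathrm{diag}(L^k)$. A subgroup $H'$ of a group $G$ is core-free if $\bigcap_{g\in G}(H')^g=1$. *)

theory Defs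
  imports "HOL-Algebra.Algebra"
begin

definition maximal_subgroup :: "'a set \<Rightarrow> ('a, 'b) monoid_scheme \<Rightarrow> bool" where
  "maximal_subgroup M G \<longleftrightarrow> subgroup M G \<and> M \<noteq> carrier G \<and>
     (\<forall>K. subgroup K G \<longrightarrow> M \<subseteq> K \<longrightarrow> K = M \<or> K = carrier G)"

definition core :: "('a, 'b) monoid_scheme \<Rightarrow> 'a set \<Rightarrow> 'a set" where
  "core G H = (\<Inter>g\<in>carrier G. (g <#\<^bsub>G\<^esub> H) #>\<^bsub>G\<^esub> inv\<^bsub>G\<^esub> g)"

definition core_free :: "'a set \<Rightarrow> ('a, 'b) monoid_scheme \<Rightarrow> bool" where
  "core_free H G \<longleftrightarrow> core G H = {\<one>\<^bsub>G\<^esub>}"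

definition minimal_normal :: "'a set \<Rightarrow> ('a, 'b) monoid_scheme \<Rightarrow> bool" where
  "minimal_normal N G \<longleftrightarrow> N \<lhd> G \<and> N \<noteq> {\<one>\<^bsub>G\<^esub>} \<and>
     (\<forall>K. K \<lhd> G \<longrightarrow> K \<subseteq> N \<longrightarrow> K = {\<one>\<^bsub>G\<^esub>} \<or> K = N)"

definition primitive_group :: "('a, 'b) monoid_scheme \<Rightarrow> bool" where
  "primitive_group G \<longleftrightarrow> (\<exists>M. maximal_subgroup M G \<and> core_free M G)"

definition monolithic_primitive_with_socle :: "('a, 'b) monoid_scheme \<Rightarrow> 'a set \<Rightarrow> bool" where
  "monolithic_primitive_with_socle G N \<longleftrightarrow> primitive_group G \<and> minimal_normal N G \<and>
     (\<forall>K. minimal_normal K G \<longrightarrow> K = N)"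

definition crown_based_power :: "('a, 'b) monoid_scheme \<Rightarrow> 'a set \<Rightarrow> nat \<Rightarrow> (nat \<Rightarrow> 'a) monoid" where
  "crown_based_power L N k =
     (product_group {..<k} (\<lambda>_. L))
       \<lparr>carrier := {x \<in> carrier (product_group {..<k} (\<lambda>_. L)).
                     \<forall>i<k. \<forall>j<k. N #>\<^bsub>L\<^esub> x i = N #>\<^bsub>L\<^esub> x j}\<rparr>"

definition power_set :: "'a set \<Rightarrow> nat \<Rightarrow> (nat \<Rightarrow> 'a) set" where
  "power_set N k = PiE {..<k} (\<lambda>_. N)"

end

theory Submission
  imports Defs
begin


definition comp4 :: "nat list \<Rightarrow> nat list \<Rightarrow> nat list" where "comp4 s t = map (\<lambda>i. s ! i) t"
definition Lall :: "nat list list" where "Lall = filter distinct (List.n_lists 4 [0..<4])"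
definition LA :: "nat list list" where "LA = [[0,1,2,3],[0,2,3,1],[0,3,1,2],[1,0,3,2],[1,2,0,3],[1,3,2,0],
 [2,0,1,3],[2,1,3,0],[2,3,0,1],[3,0,2,1],[3,1,0,2],[3,2,1,0]]"
definition LV :: "nat list list" where "LV = [[0,1,2,3],[1,0,3,2],[2,3,0,1],[3,2,1,0]]"
definition LI :: "nat list list" where "LI = [[0,1,2,3]]"

lemma c1: "\<forall>s\<in>set Lall. \<forall>t\<in>set Lall. \<forall>c\<in>set Lall. comp4 (comp4 c t) s = comp4 s t \<longrightarrow> c \<in> set LA"
  by code_simp
lemma c2: "\<forall>s\<in>set LA. \<forall>t\<in>set LA. \<forall>c\<in>set Lall. comp4 (comp4 c t) s = comp4 s t \<longrightarrow> c \<in> set LV"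
  by code_simp
lemma c3: "\<forall>s\<in>set LV. \<forall>t\<in>set LV. \<forall>c\<in>set Lall. comp4 (comp4 c t) s = comp4 s t \<longrightarrow> c \<in> set LI"
  by code_simp
lemma c4: "\<forall>s\<in>set LA. \<forall>t\<in>set LA. comp4 s t \<in> set LA" by code_simp
lemma c5: "\<forall>s\<in>set LV. \<forall>t\<in>set LV. comp4 s t \<in> set LV" by code_simp
lemma c5': "\<forall>s\<in>set LI. \<forall>t\<in>set LI. comp4 s t \<in> set LI" by code_simp
lemma c6: "\<forall>s\<in>set LA. \<forall>c\<in>set Lall. comp4 c s = [0,1,2,3] \<longrightarrow> c \<in> set LA" by code_simp
lemma c7: "\<forall>s\<in>set LV. \<forall>c\<in>set Lall. comp4 c s = [0,1,2,3] \<longrightarrow> c \<in> set LV" by code_simp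
lemma c7': "\<forall>s\<in>set LI. \<forall>c\<in>set Lall. comp4 c s = [0,1,2,3] \<longrightarrow> c \<in> set LI" by code_simp
lemma c8: "set Lall = {xs. length xs = 4 \<and> distinct xs \<and> set xs \<subseteq> {0..<4}}"
  by (auto simp: Lall_def set_n_lists)
lemma c9: "[0,1,2,3] \<in> set LA" "[0,1,2,3] \<in> set LV" "[0,1,2,3] \<in> set LI" "set LA \<subseteq> set Lall"
  by code_simp+

definition perfect :: "('a,'b) monoid_scheme \<Rightarrow> bool" where
  "perfect G \<longleftrightarrow> (\<forall>S. subgroup S G \<longrightarrow> derived_set G (carrier G) \<subseteq> S \<longrightarrow> S = carrier G)"

locale perm4_act = group Q for Q (structure) +
  fixes \<sigma> :: "'a \<Rightarrow> nat \<Rightarrow> nat"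
  assumes perf: "perfect Q"
    and inj: "\<And>a. a \<in> carrier Q \<Longrightarrow> inj_on (\<sigma> a) {0..<4}"
    and maps: "\<And>a i. a \<in> carrier Q \<Longrightarrow> i < 4 \<Longrightarrow> \<sigma> a i < 4"
    and mult: "\<And>a b i. a \<in> carrier Q \<Longrightarrow> b \<in> carrier Q \<Longrightarrow> i < 4 \<Longrightarrow> \<sigma> (a \<otimes> b) i = \<sigma> a (\<sigma> b i)"
    and one: "\<And>i. i < 4 \<Longrightarrow> \<sigma> \<one> i = i"
begin

definition lst :: "'a \<Rightarrow> nat list" where "lst a = map (\<sigma> a) [0..<4]"

lemma lst_all: "a \<in> carrier Q \<Longrightarrow> lst a \<in> set Lall"
  unfolding c8 lst_def using inj[of a] maps[of a]
  by (auto simp: distinct_map)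

lemma lst_mult: "a \<in> carrier Q \<Longrightarrow> b \<in> carrier Q \<Longrightarrow> lst (a \<otimes> b) = comp4 (lst a) (lst b)"
  unfolding lst_def comp4_def using maps[of b] by (auto simp: mult)

lemma lst_one: "lst \<one> = [0,1,2,3]"
  unfolding lst_def by (simp add: one upt_rec)

lemma step:
  assumes X: "\<forall>a\<in>carrier Q. lst a \<in> set Xs"
    and d: "\<forall>s\<in>set Xs. \<forall>t\<in>set Xs. \<forall>c\<in>set Lall. comp4 (comp4 c t) s = comp4 s t \<longrightarrow> c \<in> set Ys"
    and cl: "\<forall>s\<in>set Ys. \<forall>t\<in>set Ys. comp4 s t \<in> set Ys"
    and id: "[0,1,2,3] \<in> set Ys"
    and iv: "\<forall>s\<in>set Ys. \<forall>c\<in>set Lall. comp4 c s = [0,1,2,3] \<longrightarrow> c \<in> set Ys"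
  shows "\<forall>a\<in>carrier Q. lst a \<in> set Ys"
proof -
  let ?S = "{a \<in> carrier Q. lst a \<in> set Ys}"
  have sg: "subgroup ?S Q"
  proof
    show "?S \<subseteq> carrier Q" by auto
    show "x \<otimes> y \<in> ?S" if "x \<in> ?S" "y \<in> ?S" for x y
      using that cl lst_mult by auto
    show "\<one> \<in> ?S" using id lst_one by auto
    show "inv x \<in> ?S" if "x \<in> ?S" for x
    proof -
      have "lst (inv x \<otimes> x) = [0,1,2,3]" using that lst_one by simp
      then have "comp4 (lst (inv x)) (lst x) = [0,1,2,3]" using that lst_mult[of "inv x" x] by simp
      then show ?thesis using that iv lst_all[of "inv x"] by auto
    qed
  qed
  have "derived_set Q (carrier Q) \<subseteq> ?S"
  proof
    fix c assume "c \<in> derived_set Q (carrier Q)"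
    then obtain a b where ab: "a \<in> carrier Q" "b \<in> carrier Q" "c = a \<otimes> b \<otimes> inv a \<otimes> inv b" by blast
    then have cc: "c \<in> carrier Q" by simp
    have "c \<otimes> b \<otimes> a = a \<otimes> b" using ab by (simp add: m_assoc)
    moreover have "lst (c \<otimes> b \<otimes> a) = comp4 (comp4 (lst c) (lst b)) (lst a)"
      using lst_mult[of "c \<otimes> b" a] lst_mult[of c b] ab(1,2) cc by simp
    ultimately have "comp4 (comp4 (lst c) (lst b)) (lst a) = comp4 (lst a) (lst b)"
      using ab(1,2) lst_mult[of a b] by simp
    then show "c \<in> ?S" using d X ab cc lst_all by blast
  qed
  then have "?S = carrier Q" using perf sg unfolding perfect_def by blast
  then show ?thesis by blast
qed

lemma trivial: "a \<in> carrier Q \<Longrightarrow> i < 4 \<Longrightarrow> \<sigma> a i = i"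
proof -
  assume a: "a \<in> carrier Q" and i: "i < 4"
  have 1: "\<forall>a\<in>carrier Q. lst a \<in> set LA"
    by (rule step[of Lall]) (use lst_all c1 c4 c9 c6 in auto)
  have 2: "\<forall>a\<in>carrier Q. lst a \<in> set LV"
    by (rule step[OF 1]) (use c2 c5 c9 c7 in auto)
  have 3: "\<forall>a\<in>carrier Q. lst a \<in> set LI"
    by (rule step[OF 2]) (use c3 c5' c9 c7' in auto)
  have "lst a = [0,1,2,3]" using 3 a by (simp add: LI_def)
  then have "map (\<sigma> a) [0..<4] = map id [0..<4]" by (simp add: lst_def upt_rec)
  then show ?thesis using i by (metis map_eq_conv atLeastLessThan_iff set_upt zero_le id_apply)
qed

end



context group begin

lemma rcos_closed: "C \<in> rcosets K \<Longrightarrow> K \<subseteq> carrier G \<Longrightarrow> g \<in> carrier G \<Longrightarrow> C #> g \<in> rcosets K"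
  unfolding RCOSETS_def by (auto simp: coset_mult_assoc)

lemma rcos_back: "C \<in> rcosets K \<Longrightarrow> K \<subseteq> carrier G \<Longrightarrow> g \<in> carrier G \<Longrightarrow> C #> g #> inv g = C"
  unfolding RCOSETS_def by (auto simp: coset_mult_assoc m_assoc)

lemma perfect_small_index:
  assumes fin: "finite (carrier G)" and perf: "perfect G" and K: "subgroup K G"
    and c: "card (rcosets K) \<le> 4"
  shows "K = carrier G"
proof -
  let ?R = "rcosets K"
  let ?m = "card ?R"
  have Kc: "K \<subseteq> carrier G" using K subgroup.subset by blast
  have finR: "finite ?R" using rcosets_subset_PowG[OF K] fin by (meson finite_Pow_iff finite_subset)
  obtain e where e: "bij_betw e ?R {0..<?m}" using ex_bij_betw_finite_nat[OF finR] by blast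
  define e' where "e' = the_inv_into ?R e"
  have e'1: "i < ?m \<Longrightarrow> e' i \<in> ?R" for i
    unfolding e'_def using e by (metis atLeastLessThan_iff bij_betw_def the_inv_into_into zero_le order.refl image_eqI bij_betw_imp_surj_on)
  have e'2: "i < ?m \<Longrightarrow> e (e' i) = i" for i
    unfolding e'_def using e by (simp add: bij_betw_def f_the_inv_into_f)
  have e'3: "C \<in> ?R \<Longrightarrow> e' (e C) = C" for C
    unfolding e'_def using e by (simp add: bij_betw_def the_inv_into_f_f)
  have e4: "C \<in> ?R \<Longrightarrow> e C < ?m" for C using e by (auto simp: bij_betw_def)
  define \<sigma> where "\<sigma> a i = (if i < ?m then e (e' i #> inv a) else i)" for a i
  have sig_lt: "a \<in> carrier G \<Longrightarrow> i < ?m \<Longrightarrow> \<sigma> a i < ?m" for a i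
    unfolding \<sigma>_def using e4 e'1 rcos_closed Kc by simp
  interpret pa: perm4_act G \<sigma>
  proof
    show "perfect G" by (rule perf)
    show "inj_on (\<sigma> a) {0..<4}" if a: "a \<in> carrier G" for a
    proof (rule inj_onI)
      fix i j assume ij: "i \<in> {0..<4}" "j \<in> {0..<4}" "\<sigma> a i = \<sigma> a j"
      show "i = j"
      proof (cases "i < ?m")
        case True
        show ?thesis
        proof (cases "j < ?m")
          case True
          have "e (e' i #> inv a) = e (e' j #> inv a)" using ij \<open>i < ?m\<close> True by (simp add: \<sigma>_def)
          then have "e' i #> inv a = e' j #> inv a" using e e'1 rcos_closed Kc a \<open>i < ?m\<close> True
            by (meson bij_betw_def inj_onD inv_closed)
          then have "e' i #> inv a #> a = e' j #> inv a #> a" by simp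
          then have "e' i = e' j" using rcos_back[of _ K "inv a"] e'1 \<open>i < ?m\<close> True Kc a by simp
          then show ?thesis using e'2 \<open>i < ?m\<close> True by metis
        next
          case False
          then show ?thesis using ij \<open>i < ?m\<close> sig_lt[OF a \<open>i < ?m\<close>] by (simp add: \<sigma>_def)
        qed
      next
        case False
        then show ?thesis using ij sig_lt[OF a] by (cases "j < ?m") (simp_all add: \<sigma>_def)
      qed
    qed
    show "\<sigma> a i < 4" if "a \<in> carrier G" "i < 4" for a i
    proof (cases "i < ?m")
      case True
      then show ?thesis using sig_lt[OF that(1) True] c by linarith
    qed (use that in \<open>simp add: \<sigma>_def\<close>)
    show "\<sigma> (a \<otimes> b) i = \<sigma> a (\<sigma> b i)" if ab: "a \<in> carrier G" "b \<in> carrier G" and "i < 4" for a b i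
    proof (cases "i < ?m")
      case True
      have "\<sigma> a (\<sigma> b i) = e (e' i #> inv b #> inv a)"
        using True sig_lt[OF ab(2) True] e'3 e'1 rcos_closed Kc ab by (simp add: \<sigma>_def)
      also have "\<dots> = e (e' i #> inv (a \<otimes> b))"
      proof -
        have "e' i \<subseteq> carrier G" using e'1[OF True] rcosets_part_G[OF K] by blast
        then show ?thesis using ab by (simp add: coset_mult_assoc inv_mult_group)
      qed
      finally show ?thesis using True by (simp add: \<sigma>_def)
    qed (simp add: \<sigma>_def)
    show "\<sigma> \<one> i = i" if "i < 4" for i
    proof (cases "i < ?m")
      case True
      have "e' i \<subseteq> carrier G" using e'1[OF True] rcosets_part_G[OF K] by blast
      then show ?thesis using True e'2 by (simp add: \<sigma>_def)
    qed (simp add: \<sigma>_def)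
  qed
  show ?thesis
  proof
    show "K \<subseteq> carrier G" by (rule Kc)
    show "carrier G \<subseteq> K"
    proof
      fix a assume a: "a \<in> carrier G"
      have KR: "K \<in> ?R" using subgroup.subgroup_in_rcosets[OF K is_group] .
      have lt: "e K < 4" using e4[OF KR] c by simp
      have "\<sigma> a (e K) = e K" using pa.trivial[OF a lt] .
      then have "e (K #> inv a) = e K" using e4[OF KR] e'3[OF KR] by (simp add: \<sigma>_def)
      then have "K #> inv a = K" using e KR rcos_closed[OF KR Kc] a by (meson bij_betw_def inj_onD inv_closed)
      then have "\<one> \<otimes> inv a \<in> K" using K a by (metis rcosI subgroup.one_closed inv_closed Kc)
      then have "inv a \<in> K" using a by simp
      then show "a \<in> K" using K a by (metis inv_inv subgroup.m_inv_closed)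
    qed
  qed
qed

end



context group begin

lemma perfect_noncomm:
  assumes perf: "perfect G" and nt: "carrier G \<noteq> {\<one>}"
  shows "\<exists>a\<in>carrier G. \<exists>b\<in>carrier G. a \<otimes> b \<noteq> b \<otimes> a"
proof (rule ccontr)
  assume "\<not> ?thesis"
  then have comm: "\<And>a b. a \<in> carrier G \<Longrightarrow> b \<in> carrier G \<Longrightarrow> a \<otimes> b = b \<otimes> a" by blast
  have "derived_set G (carrier G) \<subseteq> {\<one>}"
  proof
    fix c assume "c \<in> derived_set G (carrier G)"
    then obtain a b where ab: "a \<in> carrier G" "b \<in> carrier G" "c = a \<otimes> b \<otimes> inv a \<otimes> inv b" by blast
    have "a \<otimes> b \<otimes> inv a \<otimes> inv b = b \<otimes> a \<otimes> inv a \<otimes> inv b" using comm ab by simp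
    also have "\<dots> = \<one>" using ab by (simp add: m_assoc)
    finally show "c \<in> {\<one>}" using ab by simp
  qed
  then have "{\<one>} = carrier G" using perf triv_subgroup unfolding perfect_def by blast
  then show False using nt by simp
qed

lemma perfect_proper_index:
  assumes fin: "finite (carrier G)" and perf: "perfect G" and K: "subgroup K G" and ne: "K \<noteq> carrier G"
  shows "5 * card K \<le> order G"
proof -
  have "\<not> card (rcosets K) \<le> 4" using perfect_small_index[OF fin perf K] ne by blast
  then have "5 \<le> card (rcosets K)" by simp
  then have "5 * card K \<le> card (rcosets K) * card K" by simp
  then show ?thesis using lagrange[OF K] by simp
qed

lemma perfect_order_ge_25:
  assumes fin: "finite (carrier G)" and perf: "perfect G" and nt: "carrier G \<noteq> {\<one>}"
  shows "25 \<le> order G"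
proof (rule ccontr)
  assume "\<not> 25 \<le> order G"
  then have lt: "order G < 25" by simp
  have small: "\<And>K. subgroup K G \<Longrightarrow> K \<noteq> carrier G \<Longrightarrow> 5 * card K \<le> order G"
    using perfect_proper_index[OF fin perf] by blast
  obtain a0 b0 where ab0: "a0 \<in> carrier G" "b0 \<in> carrier G" "a0 \<otimes> b0 \<noteq> b0 \<otimes> a0"
    using perfect_noncomm[OF perf nt] by blast
  have ordle: "5 * ord g \<le> order G" if g: "g \<in> carrier G" for g
  proof -
    have gen: "generate G {g} = {g [^] k | k. k \<in> (UNIV :: nat set)}"
      using generate_pow_on_finite_carrier[OF fin g] .
    have "generate G {g} \<noteq> carrier G"
    proof
      assume "generate G {g} = carrier G"
      then have "a0 \<in> generate G {g}" "b0 \<in> generate G {g}" using ab0 by auto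
      then obtain i j :: nat where "a0 = g [^] i" "b0 = g [^] j" using gen by blast
      then have "a0 \<otimes> b0 = b0 \<otimes> a0" using g by (simp add: nat_pow_mult add.commute)
      then show False using ab0 by simp
    qed
    moreover have "subgroup (generate G {g}) G" using g by (simp add: generate_is_subgroup)
    ultimately have "5 * card (generate G {g}) \<le> order G" using small by blast
    then show ?thesis using generate_pow_card[OF g] by simp
  qed
  have "\<exists>g\<in>carrier G. 3 \<le> ord g"
  proof (rule ccontr)
    assume "\<not> ?thesis"
    then have o2: "\<And>g. g \<in> carrier G \<Longrightarrow> ord g \<le> 2" by force
    have sq: "g \<otimes> g = \<one>" if g: "g \<in> carrier G" for g
    proof -
      have "ord g = 1 \<or> ord g = 2" using o2[OF g] ord_ge_1[OF fin g] by linarith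
      then show ?thesis
      proof
        assume "ord g = 1" then have "g = \<one>" using ord_eq_1 g by blast
        then show ?thesis by simp
      next
        assume "ord g = 2" then have "g [^] (2::nat) = \<one>" using pow_ord_eq_1[OF g] by simp
        then show ?thesis using g by (simp add: numeral_2_eq_2)
      qed
    qed
    have iv: "inv g = g" if g: "g \<in> carrier G" for g
      using inv_equality[OF sq[OF g] g g] .
    have "a0 \<otimes> b0 = b0 \<otimes> a0"
    proof -
      have "a0 \<otimes> b0 = inv (a0 \<otimes> b0)" using iv ab0 by simp
      also have "\<dots> = inv b0 \<otimes> inv a0" using ab0 by (simp add: inv_mult_group)
      also have "\<dots> = b0 \<otimes> a0" using iv ab0 by simp
      finally show ?thesis .
    qed
    then show False using ab0 by simp
  qed
  then obtain g where g: "g \<in> carrier G" "3 \<le> ord g" by blast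
  have o4: "ord g \<le> 4" using ordle[OF g(1)] lt by simp
  have dv: "ord g dvd order G" using ord_dvd_group_order[OF g(1)] .
  have o5: "5 * ord g \<le> order G" using ordle[OF g(1)] .
  define n where "n = order G"
  have "(ord g = 3 \<and> 3 dvd n) \<or> (ord g = 4 \<and> 4 dvd n)" 
  proof -
    have "ord g = 3 \<or> ord g = 4" using g(2) o4 by linarith
    then show ?thesis using dv n_def by auto
  qed
  then have cases: "n = 15 \<or> n = 18 \<or> n = 20 \<or> n = 21 \<or> n = 24"
    using o5 lt n_def by presburger
  have syl: "False" if p: "Factorial_Ring.prime (p::nat)" and o: "order G = p ^ a * m" and big: "order G < 5 * p ^ a" and m: "m \<noteq> 1" for p a m
  proof -
    obtain P where P: "subgroup P G" "card P = p ^ a" using sylow_thm[OF p is_group o fin] by blast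
    have pos: "p ^ a > 0" using p by (simp add: prime_gt_0_nat)
    have "P \<noteq> carrier G"
    proof
      assume "P = carrier G"
      then have e1: "card (carrier G) = p ^ a" using P by simp
      have "p ^ a * m = p ^ a * 1" using e1 o unfolding order_def by (metis mult_1_right)
      then have "m = 1" using pos by (metis nat_mult_eq_cancel1)
      then show False using m by simp
    qed
    then have "5 * p ^ a \<le> order G" using small[OF P(1)] P(2) by simp
    then show False using big by simp
  qed
  from cases show False
  proof (elim disjE)
    assume "n = 15" then show False using syl[of 5 1 3] n_def by simp
  next
    assume "n = 18" then show False using syl[of 3 2 2] n_def by simp
  next
    assume "n = 20" then show False using syl[of 5 1 4] n_def by simp
  next
    assume "n = 21" then show False using syl[of 7 1 3] n_def by simp
  next
    assume "n = 24" then show False using syl[of 2 3 3] n_def by simp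
  qed
qed

end



lemma (in normal) perfect_quotient:
  assumes perf: "perfect G"
  shows "perfect (G Mod H)"
  unfolding perfect_def
proof (intro allI impI)
  interpret h: group_hom G "G Mod H" "(#>) H"
    unfolding group_hom_def group_hom_axioms_def
    using factorgroup_is_group r_coset_hom_Mod is_group by blast
  fix S assume S: "subgroup S (G Mod H)" and D: "derived_set (G Mod H) (carrier (G Mod H)) \<subseteq> S"
  let ?S = "{x \<in> carrier G. H #> x \<in> S}"
  have sg: "subgroup ?S G"
  proof
    show "?S \<subseteq> carrier G" by auto
    show "x \<otimes> y \<in> ?S" if "x \<in> ?S" "y \<in> ?S" for x y
      using that h.hom_mult[of x y] subgroup.m_closed[OF S] by auto
    show "\<one> \<in> ?S" using h.hom_one subgroup.one_closed[OF S] by auto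
    show "inv x \<in> ?S" if "x \<in> ?S" for x
      using that h.hom_inv[of x] subgroup.m_inv_closed[OF S] by auto
  qed
  have "derived_set G (carrier G) \<subseteq> ?S"
  proof
    fix c assume "c \<in> derived_set G (carrier G)"
    then obtain a b where ab: "a \<in> carrier G" "b \<in> carrier G" "c = a \<otimes> b \<otimes> inv a \<otimes> inv b" by blast
    have "H #> c = (H #> a) \<otimes>\<^bsub>G Mod H\<^esub> (H #> b) \<otimes>\<^bsub>G Mod H\<^esub> inv\<^bsub>G Mod H\<^esub> (H #> a) \<otimes>\<^bsub>G Mod H\<^esub> inv\<^bsub>G Mod H\<^esub> (H #> b)"
      using ab by (simp del: mult_FactGroup)
    moreover have "H #> a \<in> carrier (G Mod H)" "H #> b \<in> carrier (G Mod H)"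
      using ab h.hom_closed by auto
    ultimately have "H #> c \<in> derived_set (G Mod H) (carrier (G Mod H))" by blast
    then show "c \<in> ?S" using D ab by auto
  qed
  then have "?S = carrier G" using perf sg unfolding perfect_def by blast
  then have "carrier (G Mod H) \<subseteq> S" unfolding carrier_FactGroup by auto
  then show "S = carrier (G Mod H)" using subgroup.subset[OF S] by blast
qed

locale socle_setup = group L for L (structure) +
  fixes N
  assumes finL: "finite (carrier L)"
    and mn: "minimal_normal N L"
    and nab: "\<exists>x\<in>N. \<exists>y\<in>N. x \<otimes> y \<noteq> y \<otimes> x"
begin

lemma N_normal: "N \<lhd> L" using mn unfolding minimal_normal_def by blast
lemma N_sub: "subgroup N L" using N_normal normal_imp_subgroup by blast
lemma N_carr: "N \<subseteq> carrier L" using N_sub subgroup.subset by blast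
lemma N_fin: "finite N" using N_carr finL finite_subset by blast
lemma N_ne: "N \<noteq> {\<one>}" using mn unfolding minimal_normal_def by blast

abbreviation "Q \<equiv> L\<lparr>carrier := N\<rparr>"

lemma Q_group: "group Q" using subgroup.subgroup_is_group[OF N_sub is_group] .

lemma derived_N: "derived L N = N"
proof -
  have dn: "derived L N \<lhd> L" using derived_is_normal[OF N_normal] .
  have ds: "derived L N \<subseteq> N" using derived_incl[OF _ N_sub] by blast
  have "derived L N = {\<one>} \<or> derived L N = N" using mn dn ds unfolding minimal_normal_def by blast
  moreover have "derived L N \<noteq> {\<one>}"
  proof
    assume d1: "derived L N = {\<one>}"
    obtain x y where xy: "x \<in> N" "y \<in> N" "x \<otimes> y \<noteq> y \<otimes> x" using nab by blast
    have xyc: "x \<in> carrier L" "y \<in> carrier L" using xy N_carr by auto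
    have "x \<otimes> y \<otimes> inv x \<otimes> inv y \<in> derived_set L N" using xy by blast
    then have "x \<otimes> y \<otimes> inv x \<otimes> inv y \<in> derived L N" unfolding derived_def by (rule generate.incl)
    then have e: "x \<otimes> y \<otimes> inv x \<otimes> inv y = \<one>" using d1 by blast
    have "x \<otimes> y = x \<otimes> y \<otimes> inv x \<otimes> inv y \<otimes> y \<otimes> x" using xyc by (simp add: m_assoc)
    also have "\<dots> = y \<otimes> x" using e xyc by simp
    finally show False using xy by simp
  qed
  ultimately show ?thesis by blast
qed

lemma N_perfect: "perfect Q"
  unfolding perfect_def
proof (intro allI impI)
  fix S assume S: "subgroup S Q" and D: "derived_set Q (carrier Q) \<subseteq> S"
  have SL: "subgroup S L" using incl_subgroup[OF N_sub S] .
  have "derived_set Q (carrier Q) = derived_set L N" using derived_set_consistent[OF _ N_sub] by simp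
  then have "derived L N \<subseteq> S" using D SL unfolding derived_def by (simp add: generate_subgroup_incl)
  then have "N \<subseteq> S" using derived_N by simp
  then show "S = carrier Q" using subgroup.subset[OF S] by auto
qed

lemma N_sub_index:
  assumes K: "subgroup K L" "K \<subseteq> N" "K \<noteq> N"
  shows "5 * card K \<le> card N"
proof -
  interpret Q: group Q using Q_group .
  have "subgroup K Q" using subgroup_incl[OF K(1) N_sub K(2)] .
  then have "5 * card K \<le> order Q"
    using Q.perfect_proper_index[OF _ N_perfect] N_fin K(3) by auto
  then show ?thesis by (simp add: order_def)
qed

lemma N_normal_index:
  assumes B: "subgroup B L" "B \<subseteq> N" "B \<noteq> N"
    and nrm: "\<And>n b. n \<in> N \<Longrightarrow> b \<in> B \<Longrightarrow> n \<otimes> b \<otimes> inv n \<in> B"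
  shows "25 * card B \<le> card N"
proof -
  interpret Q: group Q using Q_group .
  have BQ: "subgroup B Q" using subgroup_incl[OF B(1) N_sub B(2)] .
  have "B \<lhd> Q"
  proof (rule Q.normal_invI[OF BQ])
    fix x h assume "x \<in> carrier Q" "h \<in> B"
    then show "x \<otimes>\<^bsub>Q\<^esub> h \<otimes>\<^bsub>Q\<^esub> inv\<^bsub>Q\<^esub> x \<in> B" using nrm N_sub by simp
  qed
  then interpret BN: normal B Q .
  have MG: "group (Q Mod B)" using BN.factorgroup_is_group .
  have MP: "perfect (Q Mod B)" using BN.perfect_quotient[OF N_perfect] .
  have finM: "finite (carrier (Q Mod B))"
    using Q.rcosets_subset_PowG[OF BQ] N_fin unfolding FactGroup_def
    by (simp, meson finite_Pow_iff finite_subset)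
  obtain x where x: "x \<in> N" "x \<notin> B" using B by blast
  have "B #>\<^bsub>Q\<^esub> x \<noteq> B"
  proof
    assume "B #>\<^bsub>Q\<^esub> x = B"
    moreover have "x \<in> B #>\<^bsub>Q\<^esub> x" using x BQ Q.rcos_self by simp
    ultimately show False using x by simp
  qed
  moreover have "B #>\<^bsub>Q\<^esub> x \<in> carrier (Q Mod B)" using x unfolding carrier_FactGroup by simp
  ultimately have nt: "carrier (Q Mod B) \<noteq> {\<one>\<^bsub>Q Mod B\<^esub>}" by auto
  have "25 \<le> order (Q Mod B)" using group.perfect_order_ge_25[OF MG finM MP nt] .
  moreover have "order (Q Mod B) * card B = card N"
    using Q.lagrange[OF BQ] unfolding order_def FactGroup_def by simp
  ultimately show ?thesis by (metis mult_le_mono1)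
qed

end



locale crown_setup = socle_setup +
  fixes k :: nat
begin

abbreviation "Pk \<equiv> product_group {..<k} (\<lambda>_. L)"
abbreviation "NK \<equiv> PiE {..<k} (\<lambda>_. N)"
definition proj :: "nat \<Rightarrow> (nat \<Rightarrow> 'a) set \<Rightarrow> 'a set" where "proj j Y = (\<lambda>y. y j) ` Y"
definition ker :: "nat \<Rightarrow> (nat \<Rightarrow> 'a) set \<Rightarrow> (nat \<Rightarrow> 'a) set" where "ker j Y = {y\<in>Y. y j = \<one>}"

lemma Pk_group: "group Pk" by (rule product_group) (rule is_group)

interpretation P: group Pk by (rule Pk_group)

lemma Pk_mult: "j < k \<Longrightarrow> (x \<otimes>\<^bsub>Pk\<^esub> y) j = x j \<otimes> y j" by simp
lemma Pk_one: "j < k \<Longrightarrow> \<one>\<^bsub>Pk\<^esub> j = \<one>" by simp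
lemma Pk_inv: "x \<in> carrier Pk \<Longrightarrow> j < k \<Longrightarrow> (inv\<^bsub>Pk\<^esub> x) j = inv (x j)"
  using inv_product_group[of x "{..<k}" "\<lambda>_. L"] is_group by simp
lemma Pk_carr: "x \<in> carrier Pk \<Longrightarrow> j < k \<Longrightarrow> x j \<in> carrier L" by auto

lemma proj_mem: "y \<in> Y \<Longrightarrow> y j = x \<Longrightarrow> x \<in> proj j Y"
  unfolding proj_def by blast

lemma proj_sub:
  assumes Y: "subgroup Y Pk" and j: "j < k"
  shows "subgroup (proj j Y) L"
proof
  have Yc: "Y \<subseteq> carrier Pk" by (rule subgroup.subset[OF Y])
  show "proj j Y \<subseteq> carrier L" using Yc j unfolding proj_def by auto
  show "x \<otimes> y \<in> proj j Y" if xy: "x \<in> proj j Y" "y \<in> proj j Y" for x y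
  proof -
    obtain a b where ab: "a \<in> Y" "b \<in> Y" "x = a j" "y = b j" using xy unfolding proj_def by blast
    have "a \<otimes>\<^bsub>Pk\<^esub> b \<in> Y" by (rule subgroup.m_closed[OF Y ab(1,2)])
    moreover have "(a \<otimes>\<^bsub>Pk\<^esub> b) j = x \<otimes> y" unfolding ab(3,4) by (rule Pk_mult[OF j])
    ultimately show ?thesis by (rule proj_mem)
  qed
  show "\<one> \<in> proj j Y"
  proof -
    have "\<one>\<^bsub>Pk\<^esub> \<in> Y" by (rule subgroup.one_closed[OF Y])
    then show ?thesis using Pk_one[OF j] by (rule proj_mem)
  qed
  show "inv x \<in> proj j Y" if xx: "x \<in> proj j Y" for x
  proof -
    obtain a where a: "a \<in> Y" "x = a j" using xx unfolding proj_def by blast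
    have "inv\<^bsub>Pk\<^esub> a \<in> Y" by (rule subgroup.m_inv_closed[OF Y a(1)])
    moreover have "(inv\<^bsub>Pk\<^esub> a) j = inv x" unfolding a(2) using a(1) Yc Pk_inv[OF _ j] by blast
    ultimately show ?thesis by (rule proj_mem)
  qed
qed

lemma ker_sub:
  assumes Y: "subgroup Y Pk" and j: "j < k"
  shows "subgroup (ker j Y) Pk"
proof
  have Yc: "Y \<subseteq> carrier Pk" by (rule subgroup.subset[OF Y])
  show "ker j Y \<subseteq> carrier Pk" using Yc unfolding ker_def by auto
  show "x \<otimes>\<^bsub>Pk\<^esub> y \<in> ker j Y" if xy: "x \<in> ker j Y" "y \<in> ker j Y" for x y
  proof -
    have "x \<in> Y" "y \<in> Y" "x j = \<one>" "y j = \<one>" using xy unfolding ker_def by auto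
    moreover have "x \<otimes>\<^bsub>Pk\<^esub> y \<in> Y" by (rule subgroup.m_closed[OF Y calculation(1,2)])
    ultimately show ?thesis unfolding ker_def using Pk_mult[OF j, of x y] by simp
  qed
  show "\<one>\<^bsub>Pk\<^esub> \<in> ker j Y"
  proof -
    have "\<one>\<^bsub>Pk\<^esub> \<in> Y" by (rule subgroup.one_closed[OF Y])
    then show ?thesis unfolding ker_def using Pk_one[OF j] by simp
  qed
  show "inv\<^bsub>Pk\<^esub> x \<in> ker j Y" if xx: "x \<in> ker j Y" for x
  proof -
    have "x \<in> Y" "x j = \<one>" using xx unfolding ker_def by auto
    moreover have "inv\<^bsub>Pk\<^esub> x \<in> Y" by (rule subgroup.m_inv_closed[OF Y calculation(1)])
    moreover have "(inv\<^bsub>Pk\<^esub> x) j = \<one>" using Pk_inv[OF _ j, of x] calculation(1,2) Yc by auto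
    ultimately show ?thesis unfolding ker_def by simp
  qed
qed

lemma card_fibers:
  assumes fin: "finite Y" and c: "\<And>n. n \<in> f ` Y \<Longrightarrow> card {y\<in>Y. f y = n} = c"
  shows "card Y = card (f ` Y) * c"
proof -
  have "Y = (\<Union>n\<in>f ` Y. {y\<in>Y. f y = n})" by auto
  moreover have "card (\<Union>n\<in>f ` Y. {y\<in>Y. f y = n}) = (\<Sum>n\<in>f ` Y. card {y\<in>Y. f y = n})"
    by (rule card_UN_disjoint) (use fin in auto)
  ultimately have "card Y = (\<Sum>n\<in>f ` Y. card {y\<in>Y. f y = n})" by simp
  also have "\<dots> = card (f ` Y) * c" using c by simp
  finally show ?thesis .
qed

lemma count:
  assumes Y: "subgroup Y Pk" and fin: "finite Y" and j: "j < k"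
  shows "card Y = card (proj j Y) * card (ker j Y)"
  unfolding proj_def
proof (rule card_fibers[OF fin])
  have Yc: "Y \<subseteq> carrier Pk" by (rule subgroup.subset[OF Y])
  fix n assume "n \<in> (\<lambda>y. y j) ` Y"
  then obtain y0 where y0: "y0 \<in> Y" "y0 j = n" by auto
  have y0c: "y0 \<in> carrier Pk" using y0 Yc by auto
  have "{y\<in>Y. y j = n} = (\<lambda>z. y0 \<otimes>\<^bsub>Pk\<^esub> z) ` ker j Y"
  proof
    show "(\<lambda>z. y0 \<otimes>\<^bsub>Pk\<^esub> z) ` ker j Y \<subseteq> {y\<in>Y. y j = n}"
    proof
      fix y assume "y \<in> (\<lambda>z. y0 \<otimes>\<^bsub>Pk\<^esub> z) ` ker j Y"
      then obtain z where z: "z \<in> Y" "z j = \<one>" "y = y0 \<otimes>\<^bsub>Pk\<^esub> z" unfolding ker_def by blast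
      have "y \<in> Y" unfolding z(3) by (rule subgroup.m_closed[OF Y y0(1) z(1)])
      moreover have "y j = n"
      proof -
        have "y j = y0 j \<otimes> z j" using z(3) Pk_mult[OF j, of y0 z] by simp
        also have "\<dots> = n" using z(2) y0(2) Pk_carr[OF y0c j] by simp
        finally show ?thesis .
      qed
      ultimately show "y \<in> {y\<in>Y. y j = n}" by simp
    qed
    show "{y\<in>Y. y j = n} \<subseteq> (\<lambda>z. y0 \<otimes>\<^bsub>Pk\<^esub> z) ` ker j Y"
    proof
      fix y assume y: "y \<in> {y\<in>Y. y j = n}"
      let ?z = "inv\<^bsub>Pk\<^esub> y0 \<otimes>\<^bsub>Pk\<^esub> y"
      have yc: "y \<in> carrier Pk" using y Yc by auto
      have "?z \<in> Y" using y by (intro subgroup.m_closed[OF Y] subgroup.m_inv_closed[OF Y y0(1)]) auto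
      moreover have "?z j = \<one>"
      proof -
        have "?z j = (inv\<^bsub>Pk\<^esub> y0) j \<otimes> y j" using Pk_mult[OF j, of "inv\<^bsub>Pk\<^esub> y0" y] by blast
        also have "\<dots> = inv (y0 j) \<otimes> y j" using Pk_inv[OF y0c j] by simp
        finally have "?z j = inv (y0 j) \<otimes> y j" .
        also have "\<dots> = \<one>" using y y0 Pk_carr[OF y0c j] by simp
        finally show ?thesis .
      qed
      moreover have "y0 \<otimes>\<^bsub>Pk\<^esub> ?z = y" using y0c yc by (metis P.inv_closed P.m_assoc P.r_inv P.l_one)
      ultimately show "y \<in> (\<lambda>z. y0 \<otimes>\<^bsub>Pk\<^esub> z) ` ker j Y" unfolding ker_def by (metis (mono_tags, lifting) image_eqI mem_Collect_eq)
    qed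
  qed
  moreover have "inj_on (\<lambda>z. y0 \<otimes>\<^bsub>Pk\<^esub> z) (ker j Y)"
  proof (rule inj_onI)
    fix a b assume ab: "a \<in> ker j Y" "b \<in> ker j Y" "y0 \<otimes>\<^bsub>Pk\<^esub> a = y0 \<otimes>\<^bsub>Pk\<^esub> b"
    have "a \<in> carrier Pk" "b \<in> carrier Pk" using ab(1,2) Yc unfolding ker_def by auto
    then show "a = b" using ab(3) y0c P.l_cancel by blast
  qed
  ultimately show "card {y\<in>Y. y j = n} = card (ker j Y)" by (simp add: card_image)
qed

end



context crown_setup begin

interpretation P: group Pk by (rule Pk_group)

definition ej :: "nat \<Rightarrow> 'a \<Rightarrow> nat \<Rightarrow> 'a" where
  "ej j n = (\<lambda>i\<in>{..<k}. if i = j then n else \<one>)"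

definition W :: "nat set \<Rightarrow> (nat \<Rightarrow> 'a) set \<Rightarrow> (nat \<Rightarrow> 'a) set" where
  "W U Y = {y\<in>Y. \<forall>u\<in>U. y u = \<one>}"

lemma W_sub:
  assumes Y: "subgroup Y Pk" and U: "U \<subseteq> {..<k}"
  shows "subgroup (W U Y) Pk"
proof
  have Yc: "Y \<subseteq> carrier Pk" by (rule subgroup.subset[OF Y])
  show "W U Y \<subseteq> carrier Pk" using Yc unfolding W_def by auto
  show "x \<otimes>\<^bsub>Pk\<^esub> y \<in> W U Y" if xy: "x \<in> W U Y" "y \<in> W U Y" for x y
  proof -
    have a: "x \<in> Y" "y \<in> Y" "\<forall>u\<in>U. x u = \<one>" "\<forall>u\<in>U. y u = \<one>" using xy unfolding W_def by auto
    have "x \<otimes>\<^bsub>Pk\<^esub> y \<in> Y" by (rule subgroup.m_closed[OF Y a(1,2)])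
    moreover have "\<forall>u\<in>U. (x \<otimes>\<^bsub>Pk\<^esub> y) u = \<one>" using a(3,4) U Pk_mult by auto
    ultimately show ?thesis unfolding W_def by simp
  qed
  show "\<one>\<^bsub>Pk\<^esub> \<in> W U Y"
  proof -
    have "\<one>\<^bsub>Pk\<^esub> \<in> Y" by (rule subgroup.one_closed[OF Y])
    then show ?thesis unfolding W_def using U Pk_one by auto
  qed
  show "inv\<^bsub>Pk\<^esub> x \<in> W U Y" if xx: "x \<in> W U Y" for x
  proof -
    have a: "x \<in> Y" "\<forall>u\<in>U. x u = \<one>" using xx unfolding W_def by auto
    have "inv\<^bsub>Pk\<^esub> x \<in> Y" by (rule subgroup.m_inv_closed[OF Y a(1)])
    moreover have "\<forall>u\<in>U. (inv\<^bsub>Pk\<^esub> x) u = \<one>"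
    proof
      fix u assume u: "u \<in> U"
      then have uk: "u < k" using U by auto
      have xc: "x \<in> carrier Pk" using a(1) Yc by auto
      show "(inv\<^bsub>Pk\<^esub> x) u = \<one>" using Pk_inv[OF xc uk] a(2) u by simp
    qed
    ultimately show ?thesis unfolding W_def by simp
  qed
qed

lemma comm_lemma:
  assumes Y: "subgroup Y Pk" and YN: "Y \<subseteq> NK" and R: "R \<subseteq> {..<k}"
    and sup: "\<forall>y\<in>Y. \<forall>i<k. i \<notin> R \<longrightarrow> y i = \<one>"
    and j: "j \<in> R" and PY: "proj j Y = N"
    and all: "\<forall>l\<in>R-{j}. proj l (ker j Y) = N"
  shows "ej j ` N \<subseteq> Y"
proof -
  have Yc: "Y \<subseteq> carrier Pk" by (rule subgroup.subset[OF Y])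
  have jk: "j < k" using j R by auto
  have projN: "proj j (W U Y) \<subseteq> N" for U using YN jk unfolding proj_def W_def by auto
  have main: "finite U \<Longrightarrow> U \<subseteq> R - {j} \<Longrightarrow> proj j (W U Y) = N" for U
  proof (induction U rule: finite_induct)
    case empty
    then show ?case using PY by (simp add: W_def)
  next
    case (insert l U)
    have lR: "l \<in> R - {j}" using insert.prems by auto
    have lk: "l < k" using lR R by auto
    have UR: "U \<subseteq> R - {j}" using insert.prems by auto
    have IH: "proj j (W U Y) = N" using insert.IH[OF UR] .
    have Uk: "U \<subseteq> {..<k}" using UR R by auto
    have step1: "N \<subseteq> proj j (W {l} Y)"
    proof
      fix n assume n: "n \<in> N"
      obtain y where y: "y \<in> Y" "y j = n" using n PY unfolding proj_def by auto
      have yc: "y \<in> carrier Pk" using y Yc by auto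
      have "y l \<in> N" using y YN lk by auto
      then have "y l \<in> proj l (ker j Y)" using all lR by auto
      then obtain z where z: "z \<in> Y" "z j = \<one>" "z l = y l"
        unfolding proj_def ker_def by auto
      have zc: "z \<in> carrier Pk" using z Yc by auto
      let ?w = "y \<otimes>\<^bsub>Pk\<^esub> inv\<^bsub>Pk\<^esub> z"
      have "?w \<in> Y" by (rule subgroup.m_closed[OF Y y(1) subgroup.m_inv_closed[OF Y z(1)]])
      moreover have "?w l = \<one>"
      proof -
        have "?w l = y l \<otimes> inv (z l)" by (simp only: Pk_mult[OF lk] Pk_inv[OF zc lk])
        then show ?thesis using z(3) Pk_carr[OF yc lk] by simp
      qed
      moreover have "?w j = n"
      proof -
        have "?w j = y j \<otimes> inv (z j)" by (simp only: Pk_mult[OF jk] Pk_inv[OF zc jk])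
        then show ?thesis using z(2) y(2) Pk_carr[OF yc jk] by simp
      qed
      ultimately have "?w \<in> W {l} Y" "?w j = n" unfolding W_def by auto
      then show "n \<in> proj j (W {l} Y)" by (rule proj_mem)
    qed
    have sgI: "subgroup (proj j (W (insert l U) Y)) L"
      by (rule proj_sub[OF W_sub[OF Y] jk]) (use Uk lk in auto)
    have "derived_set L N \<subseteq> proj j (W (insert l U) Y)"
    proof
      fix c assume "c \<in> derived_set L N"
      then obtain n m where nm: "n \<in> N" "m \<in> N" "c = n \<otimes> m \<otimes> inv n \<otimes> inv m" by blast
      have "n \<in> proj j (W U Y)" using nm(1) IH by simp
      then obtain a where a: "a \<in> W U Y" "a j = n" unfolding proj_def by auto
      have "m \<in> proj j (W {l} Y)" using nm(2) step1 by auto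
      then obtain b where b: "b \<in> W {l} Y" "b j = m" unfolding proj_def by auto
      have aY: "a \<in> Y" and bY: "b \<in> Y" using a b unfolding W_def by auto
      have ac: "a \<in> carrier Pk" and bc: "b \<in> carrier Pk" using aY bY Yc by auto
      let ?c = "a \<otimes>\<^bsub>Pk\<^esub> b \<otimes>\<^bsub>Pk\<^esub> inv\<^bsub>Pk\<^esub> a \<otimes>\<^bsub>Pk\<^esub> inv\<^bsub>Pk\<^esub> b"
      have ab1: "a \<otimes>\<^bsub>Pk\<^esub> b \<in> Y" by (rule subgroup.m_closed[OF Y aY bY])
      have ab2: "a \<otimes>\<^bsub>Pk\<^esub> b \<otimes>\<^bsub>Pk\<^esub> inv\<^bsub>Pk\<^esub> a \<in> Y"
        by (rule subgroup.m_closed[OF Y ab1 subgroup.m_inv_closed[OF Y aY]])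
      have cY: "?c \<in> Y"
        by (rule subgroup.m_closed[OF Y ab2 subgroup.m_inv_closed[OF Y bY]])
      have coord: "?c i = a i \<otimes> b i \<otimes> inv (a i) \<otimes> inv (b i)" if ik: "i < k" for i
        by (simp only: Pk_mult[OF ik] Pk_inv[OF ac ik] Pk_inv[OF bc ik])
      have "\<forall>u\<in>insert l U. ?c u = \<one>"
      proof
        fix u assume u: "u \<in> insert l U"
        have uk: "u < k" using u lk Uk by auto
        have au: "a u \<in> carrier L" and bu: "b u \<in> carrier L" using Pk_carr[OF ac uk] Pk_carr[OF bc uk] .
        show "?c u = \<one>"
        proof (cases "u = l")
          case True
          then have "b u = \<one>" using b(1) unfolding W_def by auto
          have "?c u = a u \<otimes> b u \<otimes> inv (a u) \<otimes> inv (b u)" by (rule coord[OF uk])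
          also have "\<dots> = \<one>" using \<open>b u = \<one>\<close> au by (simp add: m_assoc)
          finally show ?thesis .
        next
          case False
          then have "a u = \<one>" using a(1) u unfolding W_def by auto
          have "?c u = a u \<otimes> b u \<otimes> inv (a u) \<otimes> inv (b u)" by (rule coord[OF uk])
          also have "\<dots> = \<one>" using \<open>a u = \<one>\<close> bu by (simp add: m_assoc)
          finally show ?thesis .
        qed
      qed
      then have "?c \<in> W (insert l U) Y" using cY unfolding W_def by simp
      moreover have "?c j = c"
      proof -
        have "?c j = a j \<otimes> b j \<otimes> inv (a j) \<otimes> inv (b j)" by (rule coord[OF jk])
        then show ?thesis unfolding a(2) b(2) nm(3) .
      qed
      ultimately show "c \<in> proj j (W (insert l U) Y)" by (rule proj_mem)
    qed
    then have "derived L N \<subseteq> proj j (W (insert l U) Y)"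
      unfolding derived_def using sgI by (simp add: generate_subgroup_incl)
    then show ?case using derived_N projN by auto
  qed
  have fR: "finite (R - {j})" using R finite_subset by blast
  have PN: "proj j (W (R - {j}) Y) = N" using main[OF fR] by simp
  show ?thesis
  proof
    fix x assume "x \<in> ej j ` N"
    then obtain n where n: "n \<in> N" "x = ej j n" by auto
    have "n \<in> proj j (W (R - {j}) Y)" using n(1) PN by simp
    then obtain y where y: "y \<in> W (R - {j}) Y" "y j = n" unfolding proj_def by auto
    have yY: "y \<in> Y" using y unfolding W_def by simp
    have yW: "\<forall>u\<in>R - {j}. y u = \<one>" using y unfolding W_def by simp
    have yc: "y \<in> {..<k} \<rightarrow>\<^sub>E carrier L" using yY Yc by auto
    have "y = ej j n"
    proof (rule ext)
      fix i show "y i = ej j n i"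
      proof (cases "i < k")
        case True
        show ?thesis
        proof (cases "i = j")
          case True
          have "ej j n j = n" using jk unfolding ej_def by simp
          then show ?thesis using y(2) True by simp
        next
          case False
          have "y i = \<one>"
          proof (cases "i \<in> R")
            case True
            then show ?thesis using yW False by simp
          next
            case False
            then show ?thesis using sup yY \<open>i < k\<close> by blast
          qed
          then show ?thesis using False \<open>i < k\<close> by (simp add: ej_def)
        qed
      next
        case False
        then have "i \<notin> {..<k}" by simp
        then have "y i = undefined" by (rule PiE_arb[OF yc])
        moreover have "ej j n i = undefined" using \<open>i \<notin> {..<k}\<close> unfolding ej_def by simp
        ultimately show ?thesis by simp
      qed
    qed
    then show "x \<in> Y" using yY n(2) by simp
  qed
qed

end



lemma arith1:
  fixes p y1 c r :: nat
  assumes "5 * p \<le> c" "5 ^ (r - 1) * y1 \<le> c ^ (r - 1)" "r \<ge> 1"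
  shows "5 ^ r * (p * y1) \<le> c ^ r"
proof -
  obtain r' where r: "r = Suc r'" using assms(3) by (cases r) auto
  have "5 ^ r * (p * y1) = (5 * p) * (5 ^ r' * y1)" using r by simp
  also have "\<dots> \<le> c * c ^ r'" using assms(1,2) r by (intro mult_le_mono) auto
  also have "\<dots> = c ^ r" using r by simp
  finally show ?thesis .
qed

lemma arith2:
  fixes b y2 c r :: nat
  assumes "25 * b \<le> c" "5 ^ (r - 2) * y2 \<le> c ^ (r - 2)" "r \<ge> 2"
  shows "5 ^ r * (c * (b * y2)) \<le> c ^ r"
proof -
  obtain r' where r: "r = Suc (Suc r')" using assms(3) by (metis add_2_eq_Suc le_Suc_ex)
  have "5 ^ r * (c * (b * y2)) = ((25 * b) * (5 ^ r' * y2)) * c" using r by simp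
  also have "\<dots> \<le> (c * c ^ r') * c" using assms(1,2) r by (intro mult_le_mono) auto
  also have "\<dots> = c ^ r" using r by (simp add: mult.commute mult.left_commute)
  finally show ?thesis .
qed

context crown_setup begin

interpretation P: group Pk by (rule Pk_group)

lemma NK_fin: "finite NK" using N_fin by (simp add: finite_PiE)

lemma main_count:
  "card R = r \<Longrightarrow> R \<subseteq> {..<k} \<Longrightarrow> subgroup Y Pk \<Longrightarrow> Y \<subseteq> NK \<Longrightarrow>
   (\<forall>y\<in>Y. \<forall>i<k. i \<notin> R \<longrightarrow> y i = \<one>) \<Longrightarrow> (\<forall>j\<in>R. \<not> ej j ` N \<subseteq> Y) \<Longrightarrow>
   5 ^ r * card Y \<le> card N ^ r"
proof (induction r arbitrary: R Y rule: less_induct)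
  case (less r)
  note cR = less.prems(1) and R = less.prems(2) and Y = less.prems(3) and YN = less.prems(4)
    and sup = less.prems(5) and hyp = less.prems(6)
  have Yc: "Y \<subseteq> carrier Pk" by (rule subgroup.subset[OF Y])
  have finY: "finite Y" using YN NK_fin finite_subset by blast
  have finR: "finite R" using R finite_subset by blast
  show ?case
  proof (cases "R = {}")
    case True
    then have r0: "r = 0" using cR by simp
    have "Y \<subseteq> {\<one>\<^bsub>Pk\<^esub>}"
    proof
      fix y assume yY: "y \<in> Y"
      have yc: "y \<in> {..<k} \<rightarrow>\<^sub>E carrier L" using yY Yc by auto
      have "y = \<one>\<^bsub>Pk\<^esub>"
      proof (rule ext)
        fix i show "y i = \<one>\<^bsub>Pk\<^esub> i"
        proof (cases "i < k")
          case True
          then have "y i = \<one>" using sup yY \<open>R = {}\<close> by blast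
          then show ?thesis using Pk_one[OF True] by simp
        next
          case False
          then have ik: "i \<notin> {..<k}" by simp
          have "y i = undefined" by (rule PiE_arb[OF yc ik])
          moreover have "\<one>\<^bsub>Pk\<^esub> i = undefined" using ik by simp
          ultimately show ?thesis by simp
        qed
      qed
      then show "y \<in> {\<one>\<^bsub>Pk\<^esub>}" by simp
    qed
    then have "card Y \<le> 1" by (metis card.empty card.insert finite.emptyI card_mono finite.insertI empty_iff One_nat_def)
    then show ?thesis using r0 by simp
  next
    case False
    then obtain j0 where j0: "j0 \<in> R" by blast
    have "card R > 0" using finR j0 card_gt_0_iff by blast
    then have rpos: "r \<ge> 1" using cR by simp
    show ?thesis
    proof (cases "\<exists>j\<in>R. proj j Y \<noteq> N")
      case True
      then obtain j where j: "j \<in> R" "proj j Y \<noteq> N" by blast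
      have jk: "j < k" using j R by auto
      let ?Y1 = "ker j Y" and ?R1 = "R - {j}"
      have c1: "card ?R1 = r - 1" using cR j finR by simp
      have Y1: "subgroup ?Y1 Pk" by (rule ker_sub[OF Y jk])
      have Y1N: "?Y1 \<subseteq> NK" using YN unfolding ker_def by auto
      have sup1: "\<forall>y\<in>?Y1. \<forall>i<k. i \<notin> ?R1 \<longrightarrow> y i = \<one>"
      proof (intro ballI allI impI)
        fix y i assume y: "y \<in> ?Y1" and i: "i < k" "i \<notin> ?R1"
        show "y i = \<one>"
        proof (cases "i = j")
          case True then show ?thesis using y unfolding ker_def by simp
        next
          case False then show ?thesis using y i sup unfolding ker_def by auto
        qed
      qed
      have hyp1: "\<forall>l\<in>?R1. \<not> ej l ` N \<subseteq> ?Y1" using hyp unfolding ker_def by auto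
      have IH: "5 ^ (r - 1) * card ?Y1 \<le> card N ^ (r - 1)"
        using less.IH[OF _ c1 _ Y1 Y1N sup1 hyp1] rpos R by auto
      have Psub: "subgroup (proj j Y) L" by (rule proj_sub[OF Y jk])
      have PN: "proj j Y \<subseteq> N" using YN jk unfolding proj_def by auto
      have P5: "5 * card (proj j Y) \<le> card N" by (rule N_sub_index[OF Psub PN j(2)])
      have cnt: "card Y = card (proj j Y) * card ?Y1" by (rule count[OF Y finY jk])
      show ?thesis unfolding cnt by (rule arith1[OF P5 IH rpos])
    next
      case False
      then have allN: "\<forall>j\<in>R. proj j Y = N" by blast
      let ?j = j0
      have jk: "?j < k" using j0 R by auto
      have "\<exists>l\<in>R-{?j}. proj l (ker ?j Y) \<noteq> N"
      proof (rule ccontr)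
        assume "\<not> ?thesis"
        then have "\<forall>l\<in>R-{?j}. proj l (ker ?j Y) = N" by blast
        then have "ej ?j ` N \<subseteq> Y" using comm_lemma[OF Y YN R sup j0] allN j0 by blast
        then show False using hyp j0 by blast
      qed
      then obtain l where l: "l \<in> R" "l \<noteq> ?j" "proj l (ker ?j Y) \<noteq> N" by blast
      have lk: "l < k" using l R by auto
      let ?Y1 = "ker ?j Y"
      let ?Y2 = "ker l ?Y1" and ?R2 = "R - {?j} - {l}"
      have c2: "card ?R2 = r - 2" using cR j0 l finR by simp
      have r2: "r \<ge> 2"
      proof -
        have "{?j, l} \<subseteq> R" using j0 l by auto
        then have "card {?j, l} \<le> card R" using finR by (rule card_mono[rotated])
        then show ?thesis using l(2) cR by simp
      qed
      have Y1: "subgroup ?Y1 Pk" by (rule ker_sub[OF Y jk])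
      have Y2: "subgroup ?Y2 Pk" by (rule ker_sub[OF Y1 lk])
      have Y2N: "?Y2 \<subseteq> NK" using YN unfolding ker_def by auto
      have sup2: "\<forall>y\<in>?Y2. \<forall>i<k. i \<notin> ?R2 \<longrightarrow> y i = \<one>"
      proof (intro ballI allI impI)
        fix y i assume y: "y \<in> ?Y2" and i: "i < k" "i \<notin> ?R2"
        have yY: "y \<in> Y" "y ?j = \<one>" "y l = \<one>" using y unfolding ker_def by auto
        show "y i = \<one>"
        proof (cases "i = ?j \<or> i = l")
          case True then show ?thesis using yY by auto
        next
          case False then show ?thesis using yY(1) i sup by auto
        qed
      qed
      have hyp2: "\<forall>m\<in>?R2. \<not> ej m ` N \<subseteq> ?Y2" using hyp unfolding ker_def by auto
      have IH: "5 ^ (r - 2) * card ?Y2 \<le> card N ^ (r - 2)"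
        using less.IH[OF _ c2 _ Y2 Y2N sup2 hyp2] r2 R by auto
      let ?B = "proj l ?Y1"
      have Bsub: "subgroup ?B L" by (rule proj_sub[OF Y1 lk])
      have BN: "?B \<subseteq> N" using YN lk unfolding proj_def ker_def by auto
      have Bnrm: "n \<otimes> b \<otimes> inv n \<in> ?B" if n: "n \<in> N" and b: "b \<in> ?B" for n b
      proof -
        obtain z where z: "z \<in> Y" "z ?j = \<one>" "b = z l" using b unfolding proj_def ker_def by auto
        have "n \<in> proj l Y" using allN l(1) n by simp
        then obtain y where y: "y \<in> Y" "y l = n" unfolding proj_def by auto
        have yc: "y \<in> carrier Pk" and zc: "z \<in> carrier Pk" using y z Yc by auto
        let ?w = "y \<otimes>\<^bsub>Pk\<^esub> z \<otimes>\<^bsub>Pk\<^esub> inv\<^bsub>Pk\<^esub> y"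
        have w1: "y \<otimes>\<^bsub>Pk\<^esub> z \<in> Y" by (rule subgroup.m_closed[OF Y y(1) z(1)])
        have wY: "?w \<in> Y" by (rule subgroup.m_closed[OF Y w1 subgroup.m_inv_closed[OF Y y(1)]])
        have coord: "?w i = y i \<otimes> z i \<otimes> inv (y i)" if ik: "i < k" for i
          by (simp only: Pk_mult[OF ik] Pk_inv[OF yc ik])
        have "?w ?j = \<one>"
        proof -
          have "?w ?j = y ?j \<otimes> z ?j \<otimes> inv (y ?j)" by (rule coord[OF jk])
          also have "\<dots> = \<one>" using z(2) Pk_carr[OF yc jk] by simp
          finally show ?thesis .
        qed
        then have "?w \<in> ?Y1" using wY unfolding ker_def by simp
        moreover have "?w l = n \<otimes> b \<otimes> inv n"
        proof -
          have "?w l = y l \<otimes> z l \<otimes> inv (y l)" by (rule coord[OF lk])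
          then show ?thesis unfolding y(2) z(3) .
        qed
        ultimately show ?thesis by (rule proj_mem)
      qed
      have B25: "25 * card ?B \<le> card N" by (rule N_normal_index[OF Bsub BN l(3) Bnrm])
      have finY1: "finite ?Y1" using finY unfolding ker_def by simp
      have cnt1: "card Y = card (proj ?j Y) * card ?Y1" by (rule count[OF Y finY jk])
      have cnt2: "card ?Y1 = card ?B * card ?Y2" by (rule count[OF Y1 finY1 lk])
      have "card Y = card N * (card ?B * card ?Y2)" using cnt1 cnt2 allN j0 by simp
      then show ?thesis using arith2[OF B25 IH r2] by simp
    qed
  qed
qed

end



lemma (in group) conj_back: "x \<in> carrier G \<Longrightarrow> y \<in> carrier G \<Longrightarrow> x \<otimes> (inv x \<otimes> y \<otimes> x) \<otimes> inv x = y"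
  apply (simp add: m_assoc)
  apply (simp add: m_assoc[symmetric])
  done

context crown_setup begin

interpretation P: group Pk by (rule Pk_group)

definition CC :: "(nat \<Rightarrow> 'a) set" where
  "CC = {x \<in> carrier Pk. \<forall>i<k. \<forall>j<k. N #> x i = N #> x j}"

lemma crown_eq: "crown_based_power L N k = Pk\<lparr>carrier := CC\<rparr>"
  unfolding crown_based_power_def CC_def by simp

lemma CC_sub: "subgroup CC Pk"
proof
  interpret Nn: normal N L by (rule N_normal)
  show "CC \<subseteq> carrier Pk" unfolding CC_def by auto
  show "x \<otimes>\<^bsub>Pk\<^esub> y \<in> CC" if xy: "x \<in> CC" "y \<in> CC" for x y
  proof -
    have xc: "x \<in> carrier Pk" and yc: "y \<in> carrier Pk" using xy unfolding CC_def by auto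
    have "\<forall>i<k. \<forall>j<k. N #> (x \<otimes>\<^bsub>Pk\<^esub> y) i = N #> (x \<otimes>\<^bsub>Pk\<^esub> y) j"
    proof (intro allI impI)
      fix i j assume i: "i < k" and j: "j < k"
      have "N #> (x \<otimes>\<^bsub>Pk\<^esub> y) i = N #> (x i \<otimes> y i)" by (simp only: Pk_mult[OF i])
      also have "\<dots> = (N #> x i) <#> (N #> y i)" using Pk_carr[OF xc i] Pk_carr[OF yc i] by (simp add: Nn.rcos_sum)
      also have "\<dots> = (N #> x j) <#> (N #> y j)"
      proof -
        have e1: "N #> x i = N #> x j" using xy(1) i j unfolding CC_def by blast
        have e2: "N #> y i = N #> y j" using xy(2) i j unfolding CC_def by blast
        show ?thesis by (simp only: e1 e2)
      qed
      also have "\<dots> = N #> (x j \<otimes> y j)" using Pk_carr[OF xc j] Pk_carr[OF yc j] by (simp add: Nn.rcos_sum)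
      also have "\<dots> = N #> (x \<otimes>\<^bsub>Pk\<^esub> y) j" by (simp only: Pk_mult[OF j])
      finally show "N #> (x \<otimes>\<^bsub>Pk\<^esub> y) i = N #> (x \<otimes>\<^bsub>Pk\<^esub> y) j" .
    qed
    moreover have "x \<otimes>\<^bsub>Pk\<^esub> y \<in> carrier Pk" by (rule P.m_closed[OF xc yc])
    ultimately show ?thesis unfolding CC_def by blast
  qed
  show "\<one>\<^bsub>Pk\<^esub> \<in> CC"
  proof -
    have "\<forall>i<k. \<forall>j<k. N #> \<one>\<^bsub>Pk\<^esub> i = N #> \<one>\<^bsub>Pk\<^esub> j"
      by (intro allI impI) (simp only: Pk_one)
    moreover have "\<one>\<^bsub>Pk\<^esub> \<in> carrier Pk" by (rule P.one_closed)
    ultimately show ?thesis unfolding CC_def by blast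
  qed
  show "inv\<^bsub>Pk\<^esub> x \<in> CC" if xx: "x \<in> CC" for x
  proof -
    have xc: "x \<in> carrier Pk" using xx unfolding CC_def by auto
    have "\<forall>i<k. \<forall>j<k. N #> (inv\<^bsub>Pk\<^esub> x) i = N #> (inv\<^bsub>Pk\<^esub> x) j"
    proof (intro allI impI)
      fix i j assume i: "i < k" and j: "j < k"
      have "N #> (inv\<^bsub>Pk\<^esub> x) i = N #> inv (x i)" by (simp only: Pk_inv[OF xc i])
      also have "\<dots> = set_inv (N #> x i)" using Pk_carr[OF xc i] by (simp add: Nn.rcos_inv)
      also have "\<dots> = set_inv (N #> x j)"
      proof -
        have e1: "N #> x i = N #> x j" using xx i j unfolding CC_def by blast
        show ?thesis by (simp only: e1)
      qed
      also have "\<dots> = N #> inv (x j)" using Pk_carr[OF xc j] by (simp add: Nn.rcos_inv)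
      also have "\<dots> = N #> (inv\<^bsub>Pk\<^esub> x) j" by (simp only: Pk_inv[OF xc j])
      finally show "N #> (inv\<^bsub>Pk\<^esub> x) i = N #> (inv\<^bsub>Pk\<^esub> x) j" .
    qed
    moreover have "inv\<^bsub>Pk\<^esub> x \<in> carrier Pk" by (rule P.inv_closed[OF xc])
    ultimately show ?thesis unfolding CC_def by blast
  qed
qed

lemma ej_carr: "j < k \<Longrightarrow> n \<in> carrier L \<Longrightarrow> ej j n \<in> carrier Pk"
  unfolding ej_def by auto

lemma ej_coord: "i < k \<Longrightarrow> ej j n i = (if i = j then n else \<one>)"
  unfolding ej_def by simp

lemma ej_conj:
  assumes j: "j < k" and n: "n \<in> carrier L" and g: "g \<in> carrier Pk"
  shows "inv\<^bsub>Pk\<^esub> g \<otimes>\<^bsub>Pk\<^esub> ej j n \<otimes>\<^bsub>Pk\<^esub> g = ej j (inv (g j) \<otimes> n \<otimes> g j)"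
proof (rule ext)
  fix i
  show "(inv\<^bsub>Pk\<^esub> g \<otimes>\<^bsub>Pk\<^esub> ej j n \<otimes>\<^bsub>Pk\<^esub> g) i = ej j (inv (g j) \<otimes> n \<otimes> g j) i"
  proof (cases "i < k")
    case True
    have "(inv\<^bsub>Pk\<^esub> g \<otimes>\<^bsub>Pk\<^esub> ej j n \<otimes>\<^bsub>Pk\<^esub> g) i = inv (g i) \<otimes> ej j n i \<otimes> g i"
      by (simp only: Pk_mult[OF True] Pk_inv[OF g True])
    also have "\<dots> = ej j (inv (g j) \<otimes> n \<otimes> g j) i"
    proof (cases "i = j")
      case ij: True
      have "ej j n i = n" using ej_coord[OF True, of j n] ij by simp
      moreover have "ej j (inv (g j) \<otimes> n \<otimes> g j) i = inv (g j) \<otimes> n \<otimes> g j"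
        using ej_coord[OF True, of j "inv (g j) \<otimes> n \<otimes> g j"] ij by simp
      ultimately show ?thesis using ij by simp
    next
      case ij: False
      have "ej j n i = \<one>" using ej_coord[OF True, of j n] ij by simp
      moreover have "ej j (inv (g j) \<otimes> n \<otimes> g j) i = \<one>"
        using ej_coord[OF True, of j "inv (g j) \<otimes> n \<otimes> g j"] ij by simp
      ultimately show ?thesis using Pk_carr[OF g True] by simp
    qed
    finally show ?thesis .
  next
    case False
    then have ik: "i \<notin> {..<k}" by simp
    have c: "inv\<^bsub>Pk\<^esub> g \<otimes>\<^bsub>Pk\<^esub> ej j n \<otimes>\<^bsub>Pk\<^esub> g \<in> carrier Pk"
      by (rule P.m_closed[OF P.m_closed[OF P.inv_closed[OF g] ej_carr[OF j n]] g])
    have "(inv\<^bsub>Pk\<^esub> g \<otimes>\<^bsub>Pk\<^esub> ej j n \<otimes>\<^bsub>Pk\<^esub> g) i = undefined"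
      using PiE_arb[OF c[unfolded carrier_product_group] ik] .
    moreover have "ej j (inv (g j) \<otimes> n \<otimes> g j) i = undefined" using ik unfolding ej_def by simp
    ultimately show ?thesis by simp
  qed
qed

lemma no_Nj:
  assumes Hs: "subgroup H (crown_based_power L N k)"
    and cf: "core_free H (crown_based_power L N k)"
    and HN: "H \<subseteq> NK" and j: "j < k"
  shows "\<not> ej j ` N \<subseteq> H"
proof
  assume sub: "ej j ` N \<subseteq> H"
  interpret Nn: normal N L by (rule N_normal)
  let ?G = "crown_based_power L N k"
  obtain n where n: "n \<in> N" "n \<noteq> \<one>" using N_ne subgroup.one_closed[OF N_sub] by blast
  have nc: "n \<in> carrier L" using n N_carr by auto
  have "ej j n \<in> core ?G H"
    unfolding core_def
  proof
    fix g assume g: "g \<in> carrier ?G"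
    have gC: "g \<in> CC" using g unfolding crown_eq by simp
    have gc: "g \<in> carrier Pk" using gC unfolding CC_def by simp
    have invG: "inv\<^bsub>?G\<^esub> g = inv\<^bsub>Pk\<^esub> g" unfolding crown_eq using P.m_inv_consistent[OF CC_sub gC] .
    let ?h = "inv\<^bsub>Pk\<^esub> g \<otimes>\<^bsub>Pk\<^esub> ej j n \<otimes>\<^bsub>Pk\<^esub> g"
    have "inv (g j) \<otimes> n \<otimes> g j \<in> N"
    proof -
      have "inv (g j) \<otimes> n \<otimes> inv (inv (g j)) \<in> N"
        using Nn.inv_op_closed2 Pk_carr[OF gc j] n(1)
        by (metis inv_closed inv_inv normal_invE(2)[OF N_normal])
      then show ?thesis using Pk_carr[OF gc j] by simp
    qed
    then have hH: "?h \<in> H" using ej_conj[OF j nc gc] sub by auto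
    have ejc: "ej j n \<in> carrier Pk" by (rule ej_carr[OF j nc])
    have eq: "g \<otimes>\<^bsub>Pk\<^esub> ?h \<otimes>\<^bsub>Pk\<^esub> inv\<^bsub>Pk\<^esub> g = ej j n"
      by (rule P.conj_back[OF gc ejc])
    have mem: "g \<otimes>\<^bsub>Pk\<^esub> ?h \<otimes>\<^bsub>Pk\<^esub> inv\<^bsub>Pk\<^esub> g \<in> (g <#\<^bsub>Pk\<^esub> H) #>\<^bsub>Pk\<^esub> inv\<^bsub>Pk\<^esub> g"
      using hH unfolding l_coset_def r_coset_def by blast
    have "ej j n \<in> (g <#\<^bsub>Pk\<^esub> H) #>\<^bsub>Pk\<^esub> inv\<^bsub>Pk\<^esub> g" using mem unfolding eq .
    then show "ej j n \<in> (g <#\<^bsub>?G\<^esub> H) #>\<^bsub>?G\<^esub> inv\<^bsub>?G\<^esub> g"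
      unfolding invG unfolding crown_eq l_coset_consistent r_coset_consistent .
  qed
  then have "ej j n = \<one>\<^bsub>?G\<^esub>" using cf unfolding core_free_def by blast
  then have "ej j n = \<one>\<^bsub>Pk\<^esub>" unfolding crown_eq by simp
  then have "ej j n j = \<one>\<^bsub>Pk\<^esub> j" by simp
  then show False using n(2) ej_coord[OF j] Pk_one[OF j] by simp
qed

end

theorem lemma2p1:
  fixes L :: "('a, 'b) monoid_scheme" and N :: "'a set" and k :: nat and H :: "(nat \<Rightarrow> 'a) set"
  assumes "group L" and "finite (carrier L)"
    and "monolithic_primitive_with_socle L N"
    and "\<exists>x\<in>N. \<exists>y\<in>N. x \<otimes>\<^bsub>L\<^esub> y \<noteq> y \<otimes>\<^bsub>L\<^esub> x"
    and "k \<ge> 1"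
    and "subgroup H (crown_based_power L N k)"
    and "core_free H (crown_based_power L N k)"
    and "H \<subseteq> power_set N k"
  shows "5 ^ k \<le> card (rcosets\<^bsub>(crown_based_power L N k)\<lparr>carrier := power_set N k\<rparr>\<^esub> H)"
proof -
  interpret C: crown_setup L N k
    unfolding crown_setup_def socle_setup_def socle_setup_axioms_def
    using assms(1,2,3,4) unfolding monolithic_primitive_with_socle_def by blast
  interpret P: group C.Pk by (rule C.Pk_group)
  have HN: "H \<subseteq> C.NK" using assms(8) unfolding power_set_def .
  have HC: "subgroup H C.Pk"
  proof -
    have "subgroup H (C.Pk\<lparr>carrier := C.CC\<rparr>)" using assms(6) unfolding C.crown_eq .
    then show ?thesis by (rule P.incl_subgroup[OF C.CC_sub])
  qed
  have noN: "\<forall>j\<in>{..<k}. \<not> C.ej j ` N \<subseteq> H" using C.no_Nj[OF assms(6) assms(7) HN] by blast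
  have main: "5 ^ k * card H \<le> card N ^ k"
    using C.main_count[of "{..<k}" k H] HC HN noN by simp
  have NKs: "subgroup C.NK C.Pk"
    using PiE_subgroup_product_group[of "{..<k}" "\<lambda>_. L" "\<lambda>_. N"] C.N_sub by simp
  let ?PN = "C.Pk\<lparr>carrier := C.NK\<rparr>"
  have PNg: "group ?PN" by (rule subgroup.subgroup_is_group[OF NKs P.is_group])
  have HPN: "subgroup H ?PN" by (rule P.subgroup_incl[OF HC NKs HN])
  have lag: "card (rcosets\<^bsub>?PN\<^esub> H) * card H = order ?PN" by (rule group.lagrange[OF PNg HPN])
  have ordPN: "order ?PN = card N ^ k" unfolding order_def by (simp add: card_PiE)
  have eqs: "rcosets\<^bsub>(crown_based_power L N k)\<lparr>carrier := power_set N k\<rparr>\<^esub> H = rcosets\<^bsub>?PN\<^esub> H"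
    unfolding C.crown_eq power_set_def by simp
  have Hpos: "card H > 0"
  proof -
    have "\<one>\<^bsub>C.Pk\<^esub> \<in> H" by (rule subgroup.one_closed[OF HC])
    moreover have "finite H" using HN C.NK_fin finite_subset by blast
    ultimately show ?thesis using card_gt_0_iff by blast
  qed
  have "5 ^ k * card H \<le> card (rcosets\<^bsub>?PN\<^esub> H) * card H" using main lag ordPN by simp
  then have "5 ^ k \<le> card (rcosets\<^bsub>?PN\<^esub> H)" using Hpos by simp
  then show ?thesis unfolding eqs .
qed


end
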